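(* Let $f:\mathbb{R}^{d\times n}\to\mathbb{R}^m$ be $\mathcal{G}_{+}$-invariant and bi-Lipschitz with respect to $d_{\mathcal{G}_{+}}$. Fix an orthogonal matrix $R_0\in O(d)$ with $\det R_0=-1$ and $R_0^2=I_d$, and let $\psi:\mathbb{R}^{m\times 2}\to\mathbb{R}^k$ be invariant to swapping its two columns and bi-Lipschitz (as defined in the context). Then $\tilde f({X})=\psi(f({X}),f(R_0{X}))$ is $\mathcal{G}_{\pm}$-invariant and bi-Lipschitz with respect to $d_{\mathcal{G}_{\pm}}$.
   Context: Point sets are ${X}\in\mathbb{R}^{d\times n}$. $\mathcal{G}_{\pm}$ (resp. $\mathcal{G}_{+}$) acts by column permutations, a common matrix in $O(d)$ (resp. $SO(d)$) applied to all columns, and a common translation; a function is invariant if constant on orbits. $d_{\mathcal{G}_{\pm}}({X},{Y})=\min_{g\in\mathcal{G}_{\pm}}\|{X}-g{Y}\|_F$ and $d_{\mathcal{G}_{+}}({X},{Y})=\min_{g\in\mathcal{G}_{+}}\|{X}-g{Y}\|_F$. A function $F$ is bi-Lipschitz with respect to a metric $\rho$ if there are $0<c\le C$ with $c\,\rho({X},{Y})\le\|F({X})-F({Y})\|_2\le C\rho({X},{Y})$. For $\psi$, bi-Lipschitz means: there are $0<c_\psi\le C_\psi$ such that for all $a,b,a',b'\in\mathbb{R}^m$, with $\delta=\min\{\|a-a'\|_2+\|b-b'\|_2,\ \|a-b'\|_2+\|b-a'\|_2\}$, one has $c_\psi\delta\le\|\psi(a,b)-\psi(a',b')\|_2\le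 C_\psi\delta$. *)

theory Defs
  imports "HOL-Analysis.Analysis"
begin

text \<open>Point sets X in R^(d x n) are rendered as real^'n^'d: row index i::'d, column
index j::'n; the j-th point is the column (\<chi> i. X $ i $ j).  The norm on
real^'n^'d is exactly the Frobenius norm.\<close>

type_synonym ('d,'n) grp = "(real^'d^'d) \<times> ('n \<Rightarrow> 'n) \<times> (real^'d)"

definition gact :: "real^'d^'d \<Rightarrow> ('n \<Rightarrow> 'n) \<Rightarrow> real^'d \<Rightarrow> real^'n^'d \<Rightarrow> real^'n^'d" where
  "gact Q \<sigma> t Y = (\<chi> i j. (Q ** Y) $ i $ (\<sigma> j) + t $ i)"

definition G_pm :: "('d::finite,'n::finite) grp set" where
  "G_pm = {(Q, \<sigma>, t). orthogonal_matrix Q \<and> \<sigma> permutes UNIV}"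

definition G_plus :: "('d::finite,'n::finite) grp set" where
  "G_plus = {(Q, \<sigma>, t). orthogonal_matrix Q \<and> det Q = 1 \<and> \<sigma> permutes UNIV}"

definition G_invariant ::
  "('d::finite,'n::finite) grp set \<Rightarrow> (real^'n^'d \<Rightarrow> 'b) \<Rightarrow> bool" where
  "G_invariant G F \<longleftrightarrow> (\<forall>(Q, \<sigma>, t)\<in>G. \<forall>X. F (gact Q \<sigma> t X) = F X)"

text \<open>Quotient distance d_G(X,Y) = min over g in G of ||X - gY||_F (the minimum is attained;
we write it as an infimum).\<close>
definition d_G ::
  "('d::finite,'n::finite) grp set \<Rightarrow> real^'n^'d \<Rightarrow> real^'n^'d \<Rightarrow> real" where
  "d_G G X Y = Inf ((\<lambda>(Q, \<sigma>, t). norm (X - gact Q \<sigma> t Y)) ` G)"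

definition bi_lipschitz_wrt :: "('a \<Rightarrow> 'a \<Rightarrow> real) \<Rightarrow> ('a \<Rightarrow> 'b::real_normed_vector) \<Rightarrow> bool" where
  "bi_lipschitz_wrt \<rho> F \<longleftrightarrow> (\<exists>c C. 0 < c \<and> c \<le> C \<and>
     (\<forall>X Y. c * \<rho> X Y \<le> norm (F X - F Y) \<and> norm (F X - F Y) \<le> C * \<rho> X Y))"

text \<open>psi : R^(m x 2) -> R^k, written with its two columns as separate arguments.\<close>
definition psi_bi_lipschitz :: "(real^'m \<Rightarrow> real^'m \<Rightarrow> real^'k) \<Rightarrow> bool" where
  "psi_bi_lipschitz \<psi> \<longleftrightarrow> (\<exists>c C. 0 < c \<and> c \<le> C \<and>
     (\<forall>a b a' b'. let \<delta> = min (norm (a - a') + norm (b - b')) (norm (a - b') + norm (b - a'))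
        in c * \<delta> \<le> norm (\<psi> a b - \<psi> a' b') \<and> norm (\<psi> a b - \<psi> a' b') \<le> C * \<delta>))"

end

theory Submission
  imports Defs
begin

lemma normsq_cols: "norm (Z::real^'n^'d) ^ 2 = (\<Sum>j\<in>UNIV. norm (column j Z) ^ 2)"
proof -
  have "norm Z ^ 2 = (\<Sum>i\<in>UNIV. \<Sum>j\<in>UNIV. Z$i$j * Z$i$j)"
    by (simp add: power2_norm_eq_inner inner_vec_def)
  also have "\<dots> = (\<Sum>j\<in>UNIV. \<Sum>i\<in>UNIV. Z$i$j * Z$i$j)"
    by (rule sum.swap)
  also have "\<dots> = (\<Sum>j\<in>UNIV. norm (column j Z) ^ 2)"
    by (simp add: power2_norm_eq_inner inner_vec_def column_def)
  finally show ?thesis .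
qed

lemma orth_vec_norm: "orthogonal_matrix (A::real^'d^'d) \<Longrightarrow> norm (A *v x) = norm x"
  using orthogonal_transformation_matrix[of "\<lambda>x. A *v x"]
  by (simp add: orthogonal_transformation_norm)

lemma orth_mat_norm:
  assumes "orthogonal_matrix (A::real^'d^'d)" shows "norm (A ** (Z::real^'n^'d)) = norm Z"
proof -
  have c: "column j (A ** Z) = A *v column j Z" for j
    by (simp add: column_def matrix_matrix_mult_def matrix_vector_mult_def vec_eq_iff)
  have "norm (A ** Z) ^ 2 = norm Z ^ 2"
    by (simp add: normsq_cols c orth_vec_norm[OF assms])
  then show ?thesis by (simp add: power2_eq_iff_nonneg)
qed

lemma gact_right: "gact Q \<sigma> t (A ** Y) = gact (Q ** A) \<sigma> t Y"
  by (simp add: gact_def matrix_mul_assoc)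

lemma gact_left: "A ** gact Q \<sigma> t Y = gact (A ** Q) \<sigma> (A *v t) Y"
proof -
  have "(A ** gact Q \<sigma> t Y) $ i $ j = (A ** (Q ** Y)) $ i $ (\<sigma> j) + (A *v t) $ i" for i j
    by (simp add: gact_def matrix_matrix_mult_def matrix_vector_mult_def distrib_left sum.distrib)
  then show ?thesis by (simp add: vec_eq_iff gact_def matrix_mul_assoc)
qed

lemma matrix_diff_ldistrib: "(A::real^'a^'b) ** (B - C) = A ** B - A ** C"
  by (simp add: vec_eq_iff matrix_matrix_mult_def right_diff_distrib sum_subtractf)

lemma Gplus_ne: "(mat 1, id, 0) \<in> G_plus"
  by (simp add: G_plus_def orthogonal_matrix_id permutes_id)

lemma img_ne: "(\<lambda>(Q, \<sigma>, t). norm (X - gact Q \<sigma> t Y)) ` G_plus \<noteq> {}"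
  using Gplus_ne by blast

lemma img_bdd: "bdd_below ((\<lambda>(Q, \<sigma>, t). norm (X - gact Q \<sigma> t Y)) ` G)"
  by (rule bdd_belowI[of _ 0]) auto

locale R0ctx =
  fixes R0 :: "real^'d::finite^'d"
  assumes orth: "orthogonal_matrix R0"
    and det: "det R0 = -1"
    and sq: "R0 ** R0 = mat 1"
begin

lemma D_le: "d_G G_plus (R0 ** X) (R0 ** Y) \<le> d_G (G_plus :: ('d,'n::finite) grp set) X Y"
  unfolding d_G_def
proof (rule cInf_mono[OF img_ne img_bdd])
  fix b assume "b \<in> (\<lambda>(Q, \<sigma>, t). norm (X - gact Q \<sigma> t Y)) ` (G_plus :: ('d,'n) grp set)"
  then obtain Q \<sigma> t where g: "(Q, \<sigma>, t) \<in> (G_plus :: ('d,'n) grp set)"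
    and b: "b = norm (X - gact Q \<sigma> t Y)" by auto
  have m: "(R0 ** Q ** R0, \<sigma>, R0 *v t) \<in> (G_plus :: ('d,'n) grp set)"
    using g orth det by (simp add: G_plus_def orthogonal_matrix_mul det_mul)
  have "gact (R0 ** Q ** R0) \<sigma> (R0 *v t) (R0 ** Y) = R0 ** gact Q \<sigma> t Y"
    by (simp add: gact_right gact_left sq flip: matrix_mul_assoc)
  then have "norm (R0 ** X - gact (R0 ** Q ** R0) \<sigma> (R0 *v t) (R0 ** Y)) = b"
    by (simp add: b flip: matrix_diff_ldistrib add: orth_mat_norm[OF orth])
  then show "\<exists>a\<in>(\<lambda>(Q, \<sigma>, t). norm (R0 ** X - gact Q \<sigma> t (R0 ** Y))) ` (G_plus :: ('d,'n) grp set). a \<le> b"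
    using m by force
qed

lemma D_eq: "d_G G_plus (R0 ** X) (R0 ** Y) = d_G (G_plus :: ('d,'n::finite) grp set) X Y"
  using D_le[of X Y] D_le[of "R0 ** X" "R0 ** Y"] by (simp add: matrix_mul_assoc sq)

lemma D_eq2: "d_G G_plus (R0 ** X) Y = d_G (G_plus :: ('d,'n::finite) grp set) X (R0 ** Y)"
  using D_eq[of X "R0 ** Y"] by (simp add: matrix_mul_assoc sq)

lemma img_pm: "(\<lambda>(Q, \<sigma>, t). norm (X - gact Q \<sigma> t Y)) ` (G_pm :: ('d,'n::finite) grp set) =
   (\<lambda>(Q, \<sigma>, t). norm (X - gact Q \<sigma> t Y)) ` G_plus \<union>
   (\<lambda>(Q, \<sigma>, t). norm (X - gact Q \<sigma> t (R0 ** Y))) ` G_plus" (is "?L = ?R")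
proof
  show "?L \<subseteq> ?R"
  proof
    fix b assume "b \<in> (\<lambda>(Q, \<sigma>, t). norm (X - gact Q \<sigma> t Y)) ` (G_pm :: ('d,'n::finite) grp set)"
    then obtain Q \<sigma> t where g: "(Q, \<sigma>, t) \<in> (G_pm :: ('d,'n) grp set)"
      and b: "b = norm (X - gact Q \<sigma> t Y)" by auto
    have oq: "orthogonal_matrix Q" and p: "\<sigma> permutes UNIV" using g by (auto simp: G_pm_def)
    show "b \<in> ?R"
    proof (cases "det Q = 1")
      case True
      then have "(Q, \<sigma>, t) \<in> (G_plus :: ('d,'n) grp set)" using oq p by (simp add: G_plus_def)
      then show ?thesis using b by force
    next
      case False
      then have "det Q = -1" using det_orthogonal_matrix[OF oq] by auto
      then have "(Q ** R0, \<sigma>, t) \<in> (G_plus :: ('d,'n) grp set)" using oq p orth det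
        by (simp add: G_plus_def orthogonal_matrix_mul det_mul)
      moreover have "gact (Q ** R0) \<sigma> t (R0 ** Y) = gact Q \<sigma> t Y"
        by (simp add: gact_right sq flip: matrix_mul_assoc)
      ultimately show ?thesis using b by force
    qed
  qed
next
  have "G_plus \<subseteq> (G_pm :: ('d,'n::finite) grp set)" by (auto simp: G_plus_def G_pm_def)
  moreover have "(\<lambda>(Q, \<sigma>, t). norm (X - gact Q \<sigma> t (R0 ** Y))) ` G_plus
      \<subseteq> (\<lambda>(Q, \<sigma>, t). norm (X - gact Q \<sigma> t Y)) ` (G_pm :: ('d,'n::finite) grp set)"
  proof
    fix b assume "b \<in> (\<lambda>(Q, \<sigma>, t). norm (X - gact Q \<sigma> t (R0 ** Y))) ` (G_plus :: ('d,'n::finite) grp set)"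
    then obtain Q \<sigma> t where g: "(Q, \<sigma>, t) \<in> (G_plus :: ('d,'n) grp set)"
      and b: "b = norm (X - gact Q \<sigma> t (R0 ** Y))" by auto
    have "(Q ** R0, \<sigma>, t) \<in> (G_pm :: ('d,'n) grp set)" using g orth
      by (simp add: G_plus_def G_pm_def orthogonal_matrix_mul)
    then show "b \<in> (\<lambda>(Q, \<sigma>, t). norm (X - gact Q \<sigma> t Y)) ` (G_pm :: ('d,'n::finite) grp set)" using b by (force simp: gact_right)
  qed
  ultimately show "?R \<subseteq> ?L"
    by blast
qed

lemma dpm: "d_G (G_pm :: ('d,'n::finite) grp set) X Y = min (d_G G_plus X Y) (d_G G_plus X (R0 ** Y))"
  unfolding d_G_def img_pm
  by (simp add: cInf_union_distrib[OF img_ne img_bdd img_ne img_bdd] inf_min)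

end

theorem proposition1:
  fixes f :: "real^'n^'d \<Rightarrow> real^'m"
    and \<psi> :: "real^'m \<Rightarrow> real^'m \<Rightarrow> real^'k"
    and R0 :: "real^'d^'d"
  assumes f_inv: "G_invariant G_plus f"
    and f_bilip: "bi_lipschitz_wrt (d_G G_plus) f"
    and R0_orth: "orthogonal_matrix R0"
    and R0_det: "det R0 = -1"
    and R0_sq: "R0 ** R0 = mat 1"
    and \<psi>_swap: "\<And>a b. \<psi> a b = \<psi> b a"
    and \<psi>_bilip: "psi_bi_lipschitz \<psi>"
  shows "G_invariant G_pm (\<lambda>X. \<psi> (f X) (f (R0 ** X)))
       \<and> bi_lipschitz_wrt (d_G G_pm) (\<lambda>X. \<psi> (f X) (f (R0 ** X)))"
proof
  interpret R: R0ctx R0 using R0_orth R0_det R0_sq by unfold_locales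
  have finv: "f (gact Q \<sigma> t X) = f X" if "(Q, \<sigma>, t) \<in> (G_plus :: ('d,'n) grp set)" for Q \<sigma> t X
    using f_inv that unfolding G_invariant_def by blast
  show "G_invariant G_pm (\<lambda>X. \<psi> (f X) (f (R0 ** X)))"
    unfolding G_invariant_def
  proof (clarify)
    fix Q \<sigma> t X assume g: "(Q, \<sigma>, t) \<in> (G_pm :: ('d,'n) grp set)"
    have oq: "orthogonal_matrix Q" and p: "\<sigma> permutes UNIV" using g by (auto simp: G_pm_def)
    have e1: "R0 ** gact Q \<sigma> t X = gact (R0 ** Q ** R0) \<sigma> (R0 *v t) (R0 ** X)"
      by (simp add: gact_right gact_left R0_sq flip: matrix_mul_assoc)
    have e2: "gact Q \<sigma> t X = gact (Q ** R0) \<sigma> t (R0 ** X)"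
      by (simp add: gact_right R0_sq flip: matrix_mul_assoc)
    have e3: "R0 ** gact Q \<sigma> t X = gact (R0 ** Q) \<sigma> (R0 *v t) X"
      by (simp add: gact_left)
    show "\<psi> (f (gact Q \<sigma> t X)) (f (R0 ** gact Q \<sigma> t X)) = \<psi> (f X) (f (R0 ** X))"
    proof (cases "det Q = 1")
      case True
      have "(Q, \<sigma>, t) \<in> (G_plus :: ('d,'n) grp set)" using True oq p by (simp add: G_plus_def)
      moreover have "(R0 ** Q ** R0, \<sigma>, R0 *v t) \<in> (G_plus :: ('d,'n) grp set)"
        using True oq p R0_orth R0_det by (simp add: G_plus_def orthogonal_matrix_mul det_mul)
      ultimately show ?thesis using e1 finv by metis
    next
      case False
      then have dq: "det Q = -1" using det_orthogonal_matrix[OF oq] by auto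
      have "(Q ** R0, \<sigma>, t) \<in> (G_plus :: ('d,'n) grp set)"
        using dq oq p R0_orth R0_det by (simp add: G_plus_def orthogonal_matrix_mul det_mul)
      moreover have "(R0 ** Q, \<sigma>, R0 *v t) \<in> (G_plus :: ('d,'n) grp set)"
        using dq oq p R0_orth R0_det by (simp add: G_plus_def orthogonal_matrix_mul det_mul)
      ultimately show ?thesis using e2 e3 finv \<psi>_swap by metis
    qed
  qed
  obtain cf Cf where cf: "0 < cf" "cf \<le> Cf"
    and fb: "\<And>X Y. cf * d_G G_plus X Y \<le> norm (f X - f Y) \<and> norm (f X - f Y) \<le> Cf * d_G G_plus X Y"
    using f_bilip unfolding bi_lipschitz_wrt_def by blast
  obtain cp Cp where cp: "0 < cp" "cp \<le> Cp"
    and pb: "\<And>a b a' b'. cp * min (norm (a - a') + norm (b - b')) (norm (a - b') + norm (b - a'))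
         \<le> norm (\<psi> a b - \<psi> a' b') \<and> norm (\<psi> a b - \<psi> a' b')
         \<le> Cp * min (norm (a - a') + norm (b - b')) (norm (a - b') + norm (b - a'))"
    using \<psi>_bilip unfolding psi_bi_lipschitz_def Let_def by blast
  show "bi_lipschitz_wrt (d_G G_pm) (\<lambda>X. \<psi> (f X) (f (R0 ** X)))"
    unfolding bi_lipschitz_wrt_def
  proof (rule exI[of _ "2 * cp * cf"], rule exI[of _ "2 * Cp * Cf"], intro conjI allI)
    show "0 < 2 * cp * cf" using cp cf by simp
    have "cp * cf \<le> Cp * Cf" using cp cf by (intro mult_mono) auto
    then show "2 * cp * cf \<le> 2 * Cp * Cf" by simp
    fix X Y :: "real^'n^'d"
    define A where "A = d_G G_plus X Y"
    define B where "B = d_G G_plus X (R0 ** Y)"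
    define \<delta> where "\<delta> = min (norm (f X - f Y) + norm (f (R0 ** X) - f (R0 ** Y)))
        (norm (f X - f (R0 ** Y)) + norm (f (R0 ** X) - f Y))"
    have d: "d_G G_pm X Y = min A B" unfolding A_def B_def by (rule R.dpm)
    have a2: "d_G G_plus (R0 ** X) (R0 ** Y) = A" unfolding A_def by (rule R.D_eq)
    have b2: "d_G G_plus (R0 ** X) Y = B" unfolding B_def by (rule R.D_eq2)
    have l1: "cf * A \<le> norm (f X - f Y)" "norm (f X - f Y) \<le> Cf * A"
      using fb[of X Y] unfolding A_def by auto
    have l2: "cf * A \<le> norm (f (R0 ** X) - f (R0 ** Y))" "norm (f (R0 ** X) - f (R0 ** Y)) \<le> Cf * A"
      using fb[of "R0 ** X" "R0 ** Y"] a2 by auto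
    have l3: "cf * B \<le> norm (f X - f (R0 ** Y))" "norm (f X - f (R0 ** Y)) \<le> Cf * B"
      using fb[of X "R0 ** Y"] unfolding B_def by auto
    have l4: "cf * B \<le> norm (f (R0 ** X) - f Y)" "norm (f (R0 ** X) - f Y) \<le> Cf * B"
      using fb[of "R0 ** X" Y] b2 by auto
    have lo: "2 * cf * min A B \<le> \<delta>"
    proof -
      have "2 * cf * min A B \<le> 2 * cf * A" "2 * cf * min A B \<le> 2 * cf * B"
        using cf by (auto intro: mult_left_mono)
      then show ?thesis unfolding \<delta>_def using l1 l2 l3 l4 by linarith
    qed
    have hi: "\<delta> \<le> 2 * Cf * min A B"
    proof (cases "A \<le> B")
      case True
      then show ?thesis unfolding \<delta>_def using l1 l2 by (simp add: min_def)
    next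
      case False
      then show ?thesis unfolding \<delta>_def using l3 l4 by (simp add: min_def)
    qed
    have p: "cp * \<delta> \<le> norm (\<psi> (f X) (f (R0 ** X)) - \<psi> (f Y) (f (R0 ** Y)))"
       "norm (\<psi> (f X) (f (R0 ** X)) - \<psi> (f Y) (f (R0 ** Y))) \<le> Cp * \<delta>"
      using pb[of "f X" "f Y" "f (R0 ** X)" "f (R0 ** Y)"] unfolding \<delta>_def by auto
    have "cp * (2 * cf * min A B) \<le> cp * \<delta>" using lo cp by (simp add: mult_left_mono)
    then show "2 * cp * cf * d_G G_pm X Y \<le> norm (\<psi> (f X) (f (R0 ** X)) - \<psi> (f Y) (f (R0 ** Y)))"
      using p d by (simp add: mult.assoc mult.left_commute)
    have "Cp * \<delta> \<le> Cp * (2 * Cf * min A B)" using hi cp by (simp add: mult_left_mono)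
    then show "norm (\<psi> (f X) (f (R0 ** X)) - \<psi> (f Y) (f (R0 ** Y))) \<le> 2 * Cp * Cf * d_G G_pm X Y"
      using p d by (simp add: mult.assoc mult.left_commute)
  qed
qed

end
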